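(* Let $(\alpha_n,\beta_n)$ be a Bailey pair relative to $a$. Define $\alpha^*_0=\beta^*_0=1$ and, for $n\ge1$, \[ \alpha^*_n = (aq^{n}+q^{-n})\alpha_n,\qquad \beta^*_n =\frac{(1+aq^{2n})\beta_n-\beta_{n-1}}{q^{n}}-\frac{a}{(aq,q;q)_{n}}. \] Then $(\alpha^*_n,\beta^*_n)$ is a Bailey pair relative to $a$.
   Context: Notation: $(x;q)_n=\prod_{i=0}^{n-1}(1-xq^i)$, $(x_1,\dots,x_j;q)_n=(x_1;q)_n\cdots(x_j;q)_n$. A pair of sequences $(\alpha_n,\beta_n)_{n\ge0}$ is a Bailey pair relative to $a$ if $\alpha_0=1$ and for all $n\ge0$, $\beta_n=\sum_{r=0}^n\frac{\alpha_r}{(q;q)_{n-r}(aq;q)_{n+r}}$. Parameters are assumed generic so that no denominator vanishes. *)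

theory Defs
  imports Main
begin

definition qpoch :: "'a::field \<Rightarrow> 'a \<Rightarrow> nat \<Rightarrow> 'a" where
  "qpoch x q n = (\<Prod>i<n. 1 - x * q ^ i)"

definition bailey_pair :: "'a::field \<Rightarrow> 'a \<Rightarrow> (nat \<Rightarrow> 'a) \<Rightarrow> (nat \<Rightarrow> 'a) \<Rightarrow> bool" where
  "bailey_pair q a alpha beta \<longleftrightarrow>
     alpha 0 = 1 \<and>
     (\<forall>n. beta n = (\<Sum>r=0..n. alpha r / (qpoch q q (n - r) * qpoch (a * q) q (n + r))))"

end

theory Submission
  imports Defs
begin

lemma canc: "(X::'a::field) \<noteq> 0 \<Longrightarrow> Y \<noteq> 0 \<Longrightarrow> al * (X * Y) / (P * X * (Q * Y)) = al / (P * Q)"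
  by (simp add: field_simps)

lemma qpoch_Suc: "qpoch x q (Suc k) = qpoch x q k * (1 - x * q ^ k)"
  by (simp add: qpoch_def)

theorem mainTheorem2:
  fixes q a :: "'a::field" and alpha beta :: "nat \<Rightarrow> 'a"
  assumes "q \<noteq> 0"
    and "\<And>n. qpoch q q n \<noteq> 0"
    and "\<And>n. qpoch (a * q) q n \<noteq> 0"
    and "bailey_pair q a alpha beta"
  shows "bailey_pair q a
           (\<lambda>n. if n = 0 then 1 else (a * q ^ n + inverse (q ^ n)) * alpha n)
           (\<lambda>n. if n = 0 then 1 else
                 ((1 + a * q ^ (2 * n)) * beta n - beta (n - 1)) / q ^ n
                 - a / (qpoch (a * q) q n * qpoch q q n))"
proof -
  define P where "P = qpoch q q"
  define Q where "Q = qpoch (a * q) q"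
  have P0: "\<And>k. P k \<noteq> 0" and Q0: "\<And>k. Q k \<noteq> 0" using assms(2,3) by (auto simp: P_def Q_def)
  have a0: "alpha 0 = 1" using assms(4) by (simp add: bailey_pair_def)
  have bet: "\<And>n. beta n = (\<Sum>r=0..n. alpha r / (P (n - r) * Q (n + r)))"
    using assms(4) by (simp add: bailey_pair_def P_def Q_def)
  have PS: "P (Suc k) = P k * (1 - q ^ Suc k)" for k by (simp add: P_def qpoch_Suc)
  have QS: "Q (Suc k) = Q k * (1 - a * q ^ Suc k)" for k by (simp add: Q_def qpoch_Suc mult.assoc)
  have step1: "beta m = (\<Sum>r=0..Suc m. alpha r * ((1 - q ^ (Suc m - r)) * (1 - a * q ^ (Suc m + r)))
                 / (P (Suc m - r) * Q (Suc m + r)))" for m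
  proof -
    have "(\<Sum>r=0..Suc m. alpha r * ((1 - q ^ (Suc m - r)) * (1 - a * q ^ (Suc m + r)))
                 / (P (Suc m - r) * Q (Suc m + r)))
        = (\<Sum>r=0..m. alpha r * ((1 - q ^ (Suc m - r)) * (1 - a * q ^ (Suc m + r)))
                 / (P (Suc m - r) * Q (Suc m + r)))"
      by (simp add: sum.atLeast0_atMost_Suc)
    also have "\<dots> = (\<Sum>r=0..m. alpha r / (P (m - r) * Q (m + r)))"
    proof (rule sum.cong)
      fix r assume "r \<in> {0..m}"
      then have r: "Suc m - r = Suc (m - r)" by auto
      have X: "1 - q ^ Suc (m - r) \<noteq> 0" using P0[of "Suc (m-r)"] PS[of "m-r"] by auto
      have Y: "1 - a * q ^ Suc (m + r) \<noteq> 0" using Q0[of "Suc (m+r)"] QS[of "m+r"] by auto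
      show "alpha r * ((1 - q ^ (Suc m - r)) * (1 - a * q ^ (Suc m + r))) / (P (Suc m - r) * Q (Suc m + r))
          = alpha r / (P (m - r) * Q (m + r))"
        unfolding r add_Suc PS QS using canc[OF X Y] by simp
    qed simp
    finally show ?thesis using bet[of m] by simp
  qed
  have key: "((1 + a * q ^ (2 * n)) * beta n - beta (n - 1)) / q ^ n
      = (\<Sum>r=0..n. (a * q ^ r + inverse (q ^ r)) * alpha r / (P (n - r) * Q (n + r)))"
    if n1: "n \<ge> 1" for n
  proof -
    obtain m where n: "n = Suc m" using n1 Suc_le_D by auto
    have "(1 + a * q ^ (2 * n)) * beta n - beta (n - 1)
       = (\<Sum>r=0..n. (1 + a * q ^ (2 * n)) * (alpha r / (P (n - r) * Q (n + r)))
            - alpha r * ((1 - q ^ (n - r)) * (1 - a * q ^ (n + r))) / (P (n - r) * Q (n + r)))"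
      proof -
      have b1: "beta (n - 1) = (\<Sum>r=0..n. alpha r * ((1 - q ^ (n - r)) * (1 - a * q ^ (n + r)))
                 / (P (n - r) * Q (n + r)))" using step1[of m] n by simp
      show ?thesis unfolding b1 bet[of n] sum_distrib_left sum_subtractf ..
    qed
    also have "\<dots> = (\<Sum>r=0..n. q ^ n * ((a * q ^ r + inverse (q ^ r)) * alpha r / (P (n - r) * Q (n + r))))"
    proof (rule sum.cong)
      fix r assume "r \<in> {0..n}"
      then have r: "r \<le> n" by auto
      have e1: "q ^ (n - r) = q ^ n * inverse (q ^ r)" using r assms(1)
        by (simp add: power_diff field_simps)
      have e2: "q ^ (2 * n) = q ^ (n + r) * q ^ n * inverse (q ^ r)" using r assms(1)
        proof -
        have "q ^ (2 * n) = q ^ n * q ^ n" by (simp add: mult_2 power_add)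
        moreover have "q ^ (n + r) * inverse (q ^ r) = q ^ n" using assms(1) by (simp add: power_add)
        ultimately show ?thesis by (simp add: mult.commute)
      qed
      show "(1 + a * q ^ (2 * n)) * (alpha r / (P (n - r) * Q (n + r)))
            - alpha r * ((1 - q ^ (n - r)) * (1 - a * q ^ (n + r))) / (P (n - r) * Q (n + r))
           = q ^ n * ((a * q ^ r + inverse (q ^ r)) * alpha r / (P (n - r) * Q (n + r)))"
        unfolding e1 e2 using P0 Q0 assms(1)
        by (simp add: power_add field_simps)
    qed simp
    also have "\<dots> = q ^ n * (\<Sum>r=0..n. (a * q ^ r + inverse (q ^ r)) * alpha r / (P (n - r) * Q (n + r)))"
      by (rule sum_distrib_left[symmetric])
    finally have E: "(1 + a * q ^ (2 * n)) * beta n - beta (n - 1) = q ^ n * (\<Sum>r=0..n. (a * q ^ r + inverse (q ^ r)) * alpha r / (P (n - r) * Q (n + r)))" .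
    show ?thesis unfolding E using assms(1) by simp
  qed
  show ?thesis
    unfolding bailey_pair_def
  proof (intro conjI allI)
    fix n
    show "(if n = 0 then 1 else
                 ((1 + a * q ^ (2 * n)) * beta n - beta (n - 1)) / q ^ n
                 - a / (qpoch (a * q) q n * qpoch q q n)) =
         (\<Sum>r = 0..n. (if r = 0 then 1 else (a * q ^ r + inverse (q ^ r)) * alpha r) /
                 (qpoch q q (n - r) * qpoch (a * q) q (n + r)))"
    proof (cases "n = 0")
      case True then show ?thesis by (simp add: qpoch_def)
    next
      case False
      have "(\<Sum>r = 0..n. (if r = 0 then 1 else (a * q ^ r + inverse (q ^ r)) * alpha r) /
                 (P (n - r) * Q (n + r)))
          = (\<Sum>r = 0..n. (a * q ^ r + inverse (q ^ r)) * alpha r / (P (n - r) * Q (n + r))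
               - (if r = 0 then a / (Q n * P n) else 0))"
        by (rule sum.cong) (auto simp: a0 field_simps P0 Q0)
      also have "\<dots> = (\<Sum>r = 0..n. (a * q ^ r + inverse (q ^ r)) * alpha r / (P (n - r) * Q (n + r)))
               - a / (Q n * P n)"
        by (simp add: sum_subtractf)
      finally show ?thesis using False key[of n] by (simp add: P_def Q_def)
    qed
  qed simp
qed

end
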